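(* Let $y=X\beta+\varepsilon$, where $X\in\mathbb{R}^{m\times n}$ ($m>n$) has full column rank, $\beta\in\mathbb{R}^n$ is fixed, and $\varepsilon$ is a random vector in $\mathbb{R}^m$ that is symmetrically distributed (i.e. $\varepsilon$ and $-\varepsilon$ have the same distribution). Run Algorithm 3 (PCG-Aug) with $w_1=0$ and a fixed deterministic $z_1\in\mathbb{R}^n$, and define $\hat z_i=X^{\star T}(y-\Sigma w_i)$. Fix $i$ and assume that almost surely the iterates up to index $i$ are defined (i.e. $d_j\neq0$ and $c_j\neq0$ for $j<i$) and that $w_i$ is integrable. Then $$\mathbb{E}[\hat z_i]=\beta\qquad\text{and}\qquad \mathbb{E}[w_i]=0.$$
   Context: $\Sigma\in\mathbb{R}^{m\times m}$ is symmetric (the covariance of $\varepsilon$ in the intended application), $D\in\mathbb{R}^{m\times m}$ is symmetric non-singular with $X^TD^{-1}X$ non-singular, $X^\star=D^{-1}X(X^TD^{-1}X)^{-1}$, $\Pi=(I_m-X^\star X^T)D^{-1}$. Algorithm 3 (PCG-Aug): given $z_1\in\mathbb{R}^n$ and $w_1$ with $X^Tw_1=0$, set $r_1=\Sigma w_1+Xz_1-y$, $c_1=r_1^T\Pi r_1$, $u_1=\Pi r_1$, $v_1=X^{\star T}r_1$; for $i=1,2,\dots$: $d_i=u_i^T\Sigma u_i$, $\lambda_i=c_i/d_i$, $w_{i+1}=w_i-\lambda_iu_i$, $r_{i+1}=r_i-\lambda_i(\Sigma u_i+Xv_i)$, $c_{i+1}=r_{i+1}^T\Pi r_{i+1}$,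 $\mu_i=c_{i+1}/c_i$, $v_{i+1}=X^{\star T}r_{i+1}+\mu_iv_i$, $u_{i+1}=\Pi r_{i+1}+\mu_iu_i$. Exact arithmetic. *)

theory Defs
  imports "HOL-Analysis.Analysis" "HOL-Probability.Probability"
begin

text \<open>Matrices are Cartesian-space matrices: real^'c^'r has rows indexed by 'r.
  X :: real^'n^'m is the m x n design matrix; D, Sigma :: real^'m^'m.\<close>

definition Xstar :: "real^'m^'m \<Rightarrow> real^'n^'m \<Rightarrow> real^'n^'m" where
  "Xstar D X = matrix_inv D ** X ** matrix_inv (transpose X ** matrix_inv D ** X)"

definition PiM :: "real^'m^'m \<Rightarrow> real^'n^'m \<Rightarrow> real^'m^'m" where
  "PiM D X = (mat 1 - Xstar D X ** transpose X) ** matrix_inv D"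

record ('m::finite, 'n::finite) pcg_state =
  pw :: "real^'m"
  pr :: "real^'m"
  pc :: real
  pu :: "real^'m"
  pv :: "real^'n"

definition pcg_init :: "real^'m^'m \<Rightarrow> real^'m^'m \<Rightarrow> real^'n^'m \<Rightarrow> real^'m
    \<Rightarrow> real^'n \<Rightarrow> real^'m \<Rightarrow> ('m, 'n) pcg_state" where
  "pcg_init S D X y z1 w1 =
     (let r1 = S *v w1 + X *v z1 - y
      in \<lparr> pw = w1, pr = r1, pc = r1 \<bullet> (PiM D X *v r1),
           pu = PiM D X *v r1, pv = transpose (Xstar D X) *v r1 \<rparr>)"

definition pcg_d :: "real^'m^'m \<Rightarrow> ('m, 'n::finite) pcg_state \<Rightarrow> real" where
  "pcg_d S st = pu st \<bullet> (S *v pu st)"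

definition pcg_step :: "real^'m^'m \<Rightarrow> real^'m^'m \<Rightarrow> real^'n^'m
    \<Rightarrow> ('m, 'n) pcg_state \<Rightarrow> ('m, 'n) pcg_state" where
  "pcg_step S D X st =
     (let d = pcg_d S st;
          lam = pc st / d;
          w' = pw st - lam *\<^sub>R pu st;
          r' = pr st - lam *\<^sub>R (S *v pu st + X *v pv st);
          c' = r' \<bullet> (PiM D X *v r');
          mu = c' / pc st;
          v' = transpose (Xstar D X) *v r' + mu *\<^sub>R pv st;
          u' = PiM D X *v r' + mu *\<^sub>R pu st
      in \<lparr> pw = w', pr = r', pc = c', pu = u', pv = v' \<rparr>)"

text \<open>The state at (1-based) iteration index i \<ge> 1.\<close>
definition pcg_iter :: "real^'m^'m \<Rightarrow> real^'m^'m \<Rightarrow> real^'n^'m \<Rightarrow> real^'m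
    \<Rightarrow> real^'n \<Rightarrow> real^'m \<Rightarrow> nat \<Rightarrow> ('m, 'n) pcg_state" where
  "pcg_iter S D X y z1 w1 i = (pcg_step S D X ^^ (i - 1)) (pcg_init S D X y z1 w1)"

definition symmetric_distr :: "'a measure \<Rightarrow> ('a \<Rightarrow> 'b::{real_normed_vector, topological_space}) \<Rightarrow> bool" where
  "symmetric_distr M e \<longleftrightarrow> distr M borel e = distr M borel (\<lambda>\<omega>. - e \<omega>)"

end

theory Submission
  imports Defs
begin

lemma mm_diff_r: fixes A B :: "real^'n^'m" shows "(A - B) ** C = A ** C - B ** C"
  by (simp add: matrix_matrix_mult_def vec_eq_iff algebra_simps sum_subtractf)
lemma mm_diff_l: fixes B C :: "real^'n^'m" shows "A ** (B - C) = A ** B - A ** C"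
  by (simp add: matrix_matrix_mult_def vec_eq_iff algebra_simps sum_subtractf)

lemma matrix_vector_mult_minus: fixes A :: "real^'n^'m" shows "A *v (- x) = - (A *v x)"
  by (metis add.inverse_neutral diff_0 matrix_vector_mult_0_right matrix_vector_mult_diff_distrib)

lemma minv: fixes A :: "real^'n^'n" assumes "invertible A"
  shows "A ** matrix_inv A = mat 1" "matrix_inv A ** A = mat 1"
  using someI_ex[OF assms[unfolded invertible_def]] unfolding matrix_inv_def by auto

lemma minv_transpose: fixes A :: "real^'n^'n" assumes "invertible A" "transpose A = A"
  shows "transpose (matrix_inv A) = matrix_inv A"
proof -
  have "transpose (matrix_inv A) ** A = mat 1"
    using minv(1)[OF assms(1)] by (metis assms(2) matrix_transpose_mul transpose_mat)
  then have "transpose (matrix_inv A) = transpose (matrix_inv A) ** (A ** matrix_inv A)"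
    using minv(1)[OF assms(1)] by simp
  also have "\<dots> = matrix_inv A" using \<open>transpose (matrix_inv A) ** A = mat 1\<close>
    by (simp add: matrix_mul_assoc)
  finally show ?thesis .
qed

lemma PX: fixes X :: "real^'n^'m" and D :: "real^'m^'m"
  assumes G: "invertible (transpose X ** matrix_inv D ** X)"
  shows "PiM D X ** X = 0" "transpose X ** PiM D X = 0"
proof -
  let ?G = "transpose X ** matrix_inv D ** X"
  note g = minv[OF G]
  have "PiM D X ** X = matrix_inv D ** X - matrix_inv D ** X ** (matrix_inv ?G ** ?G)"
    unfolding PiM_def Xstar_def by (simp add: matrix_mul_assoc mm_diff_r)
  then show "PiM D X ** X = 0" using g by simp
  have "transpose X ** PiM D X = transpose X ** matrix_inv D - (?G ** matrix_inv ?G) ** transpose X ** matrix_inv D"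
    unfolding PiM_def Xstar_def by (simp add: matrix_mul_assoc mm_diff_l mm_diff_r)
  then show "transpose X ** PiM D X = 0" using g by simp
qed

lemma XsX: fixes X :: "real^'n^'m" and D :: "real^'m^'m"
  assumes G: "invertible (transpose X ** matrix_inv D ** X)" and D: "invertible D" "transpose D = D"
  shows "transpose (Xstar D X) ** X = mat 1"
proof -
  let ?G = "transpose X ** matrix_inv D ** X"
  have tG: "transpose ?G = ?G" using minv_transpose[OF D]
    by (simp add: matrix_transpose_mul matrix_mul_assoc)
  have "transpose (Xstar D X) ** X = transpose (matrix_inv ?G) ** ?G"
    unfolding Xstar_def using minv_transpose[OF D]
    by (simp add: matrix_transpose_mul matrix_mul_assoc)
  also have "transpose (matrix_inv ?G) = matrix_inv ?G" by (rule minv_transpose[OF G tG])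
  finally show ?thesis using minv[OF G] by simp
qed

lemma cross: fixes X :: "real^'n^'m" and P :: "real^'m^'m"
  assumes XP: "transpose X ** P = 0"
  shows "(X *v k) \<bullet> (P *v r) = 0"
proof -
  have "(X *v k) \<bullet> (P *v r) = k \<bullet> ((transpose X ** P) *v r)"
    by (metis dot_lmul_matrix matrix_vector_mul_assoc vector_transpose_matrix)
  then show ?thesis using XP by simp
qed

lemma quad: fixes X :: "real^'n^'m" and P :: "real^'m^'m"
  assumes PX: "P ** X = 0" and XP: "transpose X ** P = 0"
  shows "(- r + X *v k) \<bullet> (P *v (- r + X *v k)) = r \<bullet> (P *v r)"
proof -
  have 1: "P *v (- r + X *v k) = - (P *v r)"
    by (simp only: matrix_vector_right_distrib matrix_vector_mul_assoc PX matrix_vector_mult_minus) (simp add: matrix_vector_mul_assoc[symmetric] PX)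
  have "(X *v k) \<bullet> (P *v r) = k \<bullet> ((transpose X ** P) *v r)"
    by (metis dot_lmul_matrix matrix_vector_mul_assoc vector_transpose_matrix)
  then have 2: "(X *v k) \<bullet> (P *v r) = 0" using XP by simp
  show ?thesis unfolding 1 using 2 by (simp add: inner_add_left inner_diff_left)
qed

definition rel :: "real^'n^'m \<Rightarrow> ('m::finite,'n::finite) pcg_state \<Rightarrow> ('m,'n) pcg_state \<Rightarrow> bool" where
  "rel X s s' \<longleftrightarrow> pw s' = - pw s \<and> pu s' = - pu s \<and> pc s' = pc s \<and> (\<exists>k. pr s' = - pr s + X *v k)"

lemma rel_step: fixes X :: "real^'n^'m"
  assumes G: "invertible (transpose X ** matrix_inv D ** X)" and r: "rel X s s'"
  shows "rel X (pcg_step S D X s) (pcg_step S D X s')"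
proof -
  note px = PX[OF G]
  obtain k where k: "pr s' = - pr s + X *v k" using r unfolding rel_def by blast
  have u: "pu s' = - pu s" and w: "pw s' = - pw s" and c: "pc s' = pc s" using r unfolding rel_def by auto
  have d: "pcg_d S s' = pcg_d S s" unfolding pcg_d_def u by (simp add: matrix_vector_mult_minus)
  define lam where "lam = pc s / pcg_d S s"
  define r1 where "r1 = pr s - lam *\<^sub>R (S *v pu s + X *v pv s)"
  define k1 where "k1 = k - lam *\<^sub>R pv s' - lam *\<^sub>R pv s"
  have r1': "pr s' - lam *\<^sub>R (S *v pu s' + X *v pv s') = - r1 + X *v k1"
    unfolding r1_def k1_def k u by (simp add: algebra_simps matrix_vector_mult_minus matrix_vector_mult_diff_distrib matrix_vector_right_distrib matrix_vector_mult_scaleR)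
  have c1: "(- r1 + X *v k1) \<bullet> (PiM D X *v (- r1 + X *v k1)) = r1 \<bullet> (PiM D X *v r1)"
    by (rule quad[OF px])
  have p1: "PiM D X *v (- r1 + X *v k1) = - (PiM D X *v r1)"
    by (simp only: matrix_vector_right_distrib matrix_vector_mult_minus) (simp add: matrix_vector_mul_assoc px(1))
  show ?thesis unfolding rel_def pcg_step_def Let_def d c lam_def[symmetric] r1_def[symmetric] r1'
    by (simp only: c1 p1 u w) (auto simp: algebra_simps cross[OF px(2)])
qed

lemma rel_init: fixes X :: "real^'n^'m"
  assumes G: "invertible (transpose X ** matrix_inv D ** X)"
  shows "rel X (pcg_init S D X (X *v beta + e) z1 0) (pcg_init S D X (X *v beta - e) z1 0)"
proof -
  note px = PX[OF G]
  define r where "r = S *v 0 + X *v z1 - (X *v beta + e)"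
  define k :: "real^'n" where "k = (z1 - beta) + (z1 - beta)"
  have r': "S *v 0 + X *v z1 - (X *v beta - e) = - r + X *v k"
    unfolding r_def k_def by (simp only: matrix_vector_mult_diff_distrib matrix_vector_right_distrib matrix_vector_mult_0_right) (simp add: vec_eq_iff)
  have p1: "PiM D X *v (- r + X *v k) = - (PiM D X *v r)"
    by (simp only: matrix_vector_right_distrib matrix_vector_mult_minus) (simp add: matrix_vector_mul_assoc px(1))
  show ?thesis unfolding rel_def pcg_init_def Let_def r_def[symmetric] r'
    using quad[OF px] p1 cross[OF px(2)] by (auto simp: inner_diff_left)
qed

lemma rel_iter: fixes X :: "real^'n^'m"
  assumes G: "invertible (transpose X ** matrix_inv D ** X)"
  shows "rel X ((pcg_step S D X ^^ n) (pcg_init S D X (X *v beta + e) z1 0))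
               ((pcg_step S D X ^^ n) (pcg_init S D X (X *v beta - e) z1 0))"
  by (induction n) (auto intro: rel_init[OF G] rel_step[OF G])

lemma mv_meas[measurable (raw)]: fixes A :: "real^'n^'m"
  assumes "f \<in> borel_measurable M"
  shows "(\<lambda>x. A *v f x) \<in> borel_measurable M"
  by (rule borel_measurable_continuous_on[OF linear_continuous_on assms]) simp

lemma step_fields:
  "pw (pcg_step S D X st) = pw st - (pc st / (pu st \<bullet> (S *v pu st))) *\<^sub>R pu st"
  "pr (pcg_step S D X st) = pr st - (pc st / (pu st \<bullet> (S *v pu st))) *\<^sub>R (S *v pu st + X *v pv st)"
  "pc (pcg_step S D X st) = (let r' = pr st - (pc st / (pu st \<bullet> (S *v pu st))) *\<^sub>R (S *v pu st + X *v pv st) in r' \<bullet> (PiM D X *v r'))"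
  "pu (pcg_step S D X st) = (let r' = pr st - (pc st / (pu st \<bullet> (S *v pu st))) *\<^sub>R (S *v pu st + X *v pv st) in
       PiM D X *v r' + ((r' \<bullet> (PiM D X *v r')) / pc st) *\<^sub>R pu st)"
  "pv (pcg_step S D X st) = (let r' = pr st - (pc st / (pu st \<bullet> (S *v pu st))) *\<^sub>R (S *v pu st + X *v pv st) in
       transpose (Xstar D X) *v r' + ((r' \<bullet> (PiM D X *v r')) / pc st) *\<^sub>R pv st)"
  unfolding pcg_step_def pcg_d_def Let_def by simp_all

lemma iter_meas:
  fixes X :: "real^'n^'m"
  shows "(\<lambda>y. pw ((pcg_step S D X ^^ n) (pcg_init S D X y z1 w1))) \<in> borel_measurable borel \<and>
         (\<lambda>y. pr ((pcg_step S D X ^^ n) (pcg_init S D X y z1 w1))) \<in> borel_measurable borel \<and>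
         (\<lambda>y. pc ((pcg_step S D X ^^ n) (pcg_init S D X y z1 w1))) \<in> borel_measurable borel \<and>
         (\<lambda>y. pu ((pcg_step S D X ^^ n) (pcg_init S D X y z1 w1))) \<in> borel_measurable borel \<and>
         (\<lambda>y. pv ((pcg_step S D X ^^ n) (pcg_init S D X y z1 w1))) \<in> borel_measurable borel"
proof (induction n)
  case 0
  show ?case unfolding pcg_init_def Let_def by (simp del: transpose_matrix_vector) measurable
next
  case (Suc n)
  then have [measurable]:
    "(\<lambda>y. pw ((pcg_step S D X ^^ n) (pcg_init S D X y z1 w1))) \<in> borel_measurable borel"
    "(\<lambda>y. pr ((pcg_step S D X ^^ n) (pcg_init S D X y z1 w1))) \<in> borel_measurable borel"
    "(\<lambda>y. pc ((pcg_step S D X ^^ n) (pcg_init S D X y z1 w1))) \<in> borel_measurable borel"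
    "(\<lambda>y. pu ((pcg_step S D X ^^ n) (pcg_init S D X y z1 w1))) \<in> borel_measurable borel"
    "(\<lambda>y. pv ((pcg_step S D X ^^ n) (pcg_init S D X y z1 w1))) \<in> borel_measurable borel"
    by auto
  show ?case unfolding funpow.simps(2) o_apply step_fields Let_def by (intro conjI; measurable)
qed

lemma sym_zero:
  fixes eps :: "'a \<Rightarrow> real^'m" and h :: "real^'m \<Rightarrow> real^'k"
  assumes "eps \<in> borel_measurable M" "symmetric_distr M eps"
    and hm: "h \<in> borel_measurable borel" and odd: "\<And>e. h (- e) = - h e"
  shows "integral\<^sup>L M (\<lambda>\<omega>. h (eps \<omega>)) = 0"
proof -
  have m2: "(\<lambda>\<omega>. - eps \<omega>) \<in> borel_measurable M" using assms(1) by measurable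
  have "integral\<^sup>L M (\<lambda>\<omega>. h (eps \<omega>)) = integral\<^sup>L (distr M borel eps) h"
    by (rule integral_distr[symmetric, OF assms(1) hm])
  also have "\<dots> = integral\<^sup>L (distr M borel (\<lambda>\<omega>. - eps \<omega>)) h"
    using assms(2) unfolding symmetric_distr_def by simp
  also have "\<dots> = integral\<^sup>L M (\<lambda>\<omega>. h (- eps \<omega>))"
    by (rule integral_distr[OF m2 hm])
  also have "\<dots> = - integral\<^sup>L M (\<lambda>\<omega>. h (eps \<omega>))" by (simp add: odd)
  finally have "integral\<^sup>L M (\<lambda>\<omega>. h (eps \<omega>)) = - integral\<^sup>L M (\<lambda>\<omega>. h (eps \<omega>))" .
  then have "2 *\<^sub>R integral\<^sup>L M (\<lambda>\<omega>. h (eps \<omega>)) = 0"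
    by (metis add.right_inverse scaleR_2)
  then show ?thesis by simp
qed

theorem mainTheorem7:
  fixes M :: "'a measure"
    and X :: "real^'n^'m" and beta :: "real^'n"
    and eps :: "'a \<Rightarrow> real^'m"
    and S D :: "real^'m^'m" and z1 :: "real^'n" and i :: nat
  assumes "prob_space M"
    and "CARD('m) > CARD('n)"
    and "rank X = CARD('n)"
    and "transpose S = S"
    and "transpose D = D" and "invertible D"
    and "invertible (transpose X ** matrix_inv D ** X)"
    and "eps \<in> borel_measurable M"
    and "integrable M eps"
    and "symmetric_distr M eps"
    and "i \<ge> 1"
    and "AE \<omega> in M. \<forall>j. 1 \<le> j \<and> j < i \<longrightarrow>
           pcg_d S (pcg_iter S D X (X *v beta + eps \<omega>) z1 0 j) \<noteq> 0 \<and>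
           pc (pcg_iter S D X (X *v beta + eps \<omega>) z1 0 j) \<noteq> 0"
    and "integrable M (\<lambda>\<omega>. pw (pcg_iter S D X (X *v beta + eps \<omega>) z1 0 i))"
  shows "prob_space.expectation M (\<lambda>\<omega>. transpose (Xstar D X) *v
             ((X *v beta + eps \<omega>) - S *v pw (pcg_iter S D X (X *v beta + eps \<omega>) z1 0 i))) = beta
         \<and> prob_space.expectation M (\<lambda>\<omega>. pw (pcg_iter S D X (X *v beta + eps \<omega>) z1 0 i)) = 0"
proof -
  interpret prob_space M by fact
  note G = assms(7)
  define h where "h e = pw ((pcg_step S D X ^^ (i - 1)) (pcg_init S D X (X *v beta + e) z1 0))" for e
  have hw: "pw (pcg_iter S D X (X *v beta + e) z1 0 i) = h e" for e
    unfolding h_def pcg_iter_def ..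
  have hm: "h \<in> borel_measurable borel"
  proof -
    have "(\<lambda>y. pw ((pcg_step S D X ^^ (i - 1)) (pcg_init S D X y z1 0))) \<in> borel_measurable borel"
      using iter_meas by blast
    moreover have "(\<lambda>e. X *v beta + e) \<in> borel_measurable borel" by measurable
    ultimately show ?thesis unfolding h_def
      using measurable_compose by blast
  qed
  have hodd: "h (- e) = - h e" for e
  proof -
    have "rel X ((pcg_step S D X ^^ (i - 1)) (pcg_init S D X (X *v beta + e) z1 0))
               ((pcg_step S D X ^^ (i - 1)) (pcg_init S D X (X *v beta - e) z1 0))"
      by (rule rel_iter[OF G])
    then show ?thesis unfolding h_def rel_def by simp
  qed
  have Ew: "integral\<^sup>L M (\<lambda>\<omega>. h (eps \<omega>)) = 0"
    by (rule sym_zero[OF assms(8) assms(10) hm hodd])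
  have Ee: "integral\<^sup>L M (\<lambda>\<omega>. id (eps \<omega>)) = 0"
    by (rule sym_zero[OF assms(8) assms(10)]) auto
  have iw: "integrable M (\<lambda>\<omega>. h (eps \<omega>))" using assms(13) unfolding hw .
  let ?A = "transpose (Xstar D X)"
  have "integral\<^sup>L M (\<lambda>\<omega>. ?A *v ((X *v beta + eps \<omega>) - S *v h (eps \<omega>)))
      = ?A *v integral\<^sup>L M (\<lambda>\<omega>. (X *v beta + eps \<omega>) - S *v h (eps \<omega>))"
    by (rule integral_bounded_linear[OF matrix_vector_mul_bounded_linear])
       (intro Bochner_Integration.integrable_diff Bochner_Integration.integrable_add integrable_const assms(9) integrable_bounded_linear[OF matrix_vector_mul_bounded_linear iw])
  also have "integral\<^sup>L M (\<lambda>\<omega>. (X *v beta + eps \<omega>) - S *v h (eps \<omega>))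
      = (X *v beta + integral\<^sup>L M eps) - S *v integral\<^sup>L M (\<lambda>\<omega>. h (eps \<omega>))"
    using iw assms(9)
    by (subst Bochner_Integration.integral_diff, (intro Bochner_Integration.integrable_add integrable_const assms(9) integrable_bounded_linear[OF matrix_vector_mul_bounded_linear iw])+,
        subst Bochner_Integration.integral_add, (intro integrable_const assms(9))+,
        subst integral_bounded_linear[OF matrix_vector_mul_bounded_linear iw], simp add: prob_space)
  also have "\<dots> = X *v beta" using Ew Ee by simp
  also have "?A *v (X *v beta) = beta"
    by (simp only: matrix_vector_mul_assoc XsX[OF G assms(6) assms(5)] matrix_vector_mul_lid)
  finally show ?thesis unfolding hw using Ew by simp
qed

end
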